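(* Let $A\| B$ be a right D2 extension. Then the maps $$S\otimes_R\mathcal E\to\mathrm{Hom}({}_BA\otimes_BA,{}_BA),\quad \alpha\otimes f\mapsto(a\otimes a'\mapsto\alpha(a)f(a'))$$ and $$S\otimes_RS\otimes_R\mathcal E\to\mathrm{Hom}({}_BA\otimes_BA\otimes_BA,{}_BA),\quad \alpha\otimes\beta\otimes f\mapsto(a\otimes a'\otimes a''\mapsto\alpha(a)\beta(a')f(a''))$$ are isomorphisms. (The inverse of the first is $F\mapsto\sum_j\gamma_j\otimes u_j^1F(u_j^2\otimes-)$ for any right D2 quasibase $\gamma_j,u_j$.)
   Context: Algebras over a commutative ring $K$; $A\| B$ a unit-preserving algebra homomorphism $B\to A$; $R=A^B$ the centralizer; $S=\mathrm{End}({}_BA_B)$, $\mathcal E=\mathrm{End}({}_BA)$ (left $B$-linear endomorphisms), both under composition; $T=(A\otimes_BA)^B$ with Sweedler notation $t=t^1\otimes t^2$. $S$ is an $R$-bimodule via $r\cdot\alpha\cdot r'=r\alpha(-)r'$ and $\mathcal E$ a left $R$-module via $r\cdot f=rf(-)$. $A\| B$ is right D2 if $A\otimes_BA$ is isomorphic as an $A$-$B$-bimodule to a direct summand of some finite direct sum $A^n$; equivalently there is a right D2 quasibase: finitely many $\gamma_j\in S,u_j\in T$ with $a\otimes_Ba'=\sum_ja\gamma_j(a')u_j^1\otimes u_j^2$ for all $a,a'\in A$. *)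

theory Defs
  imports Main "HOL-Library.Function_Algebras"
begin

text \<open>Unit-preserving ring homomorphism B to A (the extension A | B).
  The ground ring K plays no role: every ring is a Z-algebra and all
  maps below are additive, hence K-linear automatically.\<close>
definition unital_hom :: "('b::ring_1 \<Rightarrow> 'a::ring_1) \<Rightarrow> bool" where
  "unital_hom \<phi> \<longleftrightarrow> \<phi> 1 = 1 \<and> (\<forall>x y. \<phi> (x + y) = \<phi> x + \<phi> y) \<and> (\<forall>x y. \<phi> (x * y) = \<phi> x * \<phi> y)"

definition additive :: "('a::ring_1 \<Rightarrow> 'a) \<Rightarrow> bool" where
  "additive f \<longleftrightarrow> (\<forall>x y. f (x + y) = f x + f y)"

definition Sset :: "('b::ring_1 \<Rightarrow> 'a::ring_1) \<Rightarrow> ('a \<Rightarrow> 'a) set" where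
  "Sset \<phi> = {\<alpha>. additive \<alpha> \<and> (\<forall>b x. \<alpha> (\<phi> b * x) = \<phi> b * \<alpha> x \<and> \<alpha> (x * \<phi> b) = \<alpha> x * \<phi> b)}"

definition Eset :: "('b::ring_1 \<Rightarrow> 'a::ring_1) \<Rightarrow> ('a \<Rightarrow> 'a) set" where
  "Eset \<phi> = {f. additive f \<and> (\<forall>b x. f (\<phi> b * x) = \<phi> b * f x)}"

definition Rset :: "('b::ring_1 \<Rightarrow> 'a::ring_1) \<Rightarrow> 'a set" where
  "Rset \<phi> = {r. \<forall>b. r * \<phi> b = \<phi> b * r}"

text \<open>Generic n-fold balanced tensor product M_1 (x)_R ... (x)_R M_n of modules
  living in one additive group 'x. A formal sum of pure tensors is a list of
  n-tuples (each tuple a list of length n); the tensor product is the quotient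
  of such lists by the congruence tensor_eq generated by the defining relations.\<close>
definition tuples :: "'x set list \<Rightarrow> 'x list set" where
  "tuples Ms = {x. length x = length Ms \<and> (\<forall>i<length Ms. x ! i \<in> Ms ! i)}"

inductive tensor_eq :: "'x::ab_group_add set list \<Rightarrow> 'r set \<Rightarrow> ('x \<Rightarrow> 'r \<Rightarrow> 'x) \<Rightarrow> ('r \<Rightarrow> 'x \<Rightarrow> 'x)
    \<Rightarrow> 'x list list \<Rightarrow> 'x list list \<Rightarrow> bool"
  for Ms R ract lact where
  refl: "set l \<subseteq> tuples Ms \<Longrightarrow> tensor_eq Ms R ract lact l l"
| sym: "tensor_eq Ms R ract lact l l' \<Longrightarrow> tensor_eq Ms R ract lact l' l"
| trans: "tensor_eq Ms R ract lact l l' \<Longrightarrow> tensor_eq Ms R ract lact l' l''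
      \<Longrightarrow> tensor_eq Ms R ract lact l l''"
| app: "tensor_eq Ms R ract lact l1 l2 \<Longrightarrow> tensor_eq Ms R ract lact l3 l4
      \<Longrightarrow> tensor_eq Ms R ract lact (l1 @ l3) (l2 @ l4)"
| swap: "x \<in> tuples Ms \<Longrightarrow> y \<in> tuples Ms \<Longrightarrow> tensor_eq Ms R ract lact [x, y] [y, x]"
| add: "i < length Ms \<Longrightarrow> x \<in> tuples Ms \<Longrightarrow> y \<in> tuples Ms
      \<Longrightarrow> (\<forall>j. j \<noteq> i \<longrightarrow> x ! j = y ! j) \<Longrightarrow> x[i := x ! i + y ! i] \<in> tuples Ms
      \<Longrightarrow> tensor_eq Ms R ract lact [x[i := x ! i + y ! i]] [x, y]"
| zero: "i < length Ms \<Longrightarrow> x \<in> tuples Ms \<Longrightarrow> x ! i = 0 \<Longrightarrow> tensor_eq Ms R ract lact [x] []"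
| bal: "Suc i < length Ms \<Longrightarrow> x \<in> tuples Ms \<Longrightarrow> r \<in> R
      \<Longrightarrow> x[i := ract (x ! i) r] \<in> tuples Ms \<Longrightarrow> x[Suc i := lact r (x ! Suc i)] \<in> tuples Ms
      \<Longrightarrow> tensor_eq Ms R ract lact [x[i := ract (x ! i) r]] [x[Suc i := lact r (x ! Suc i)]]"

abbreviation Atensor_eq :: "('b::ring_1 \<Rightarrow> 'a::ring_1) \<Rightarrow> nat \<Rightarrow> 'a list list \<Rightarrow> 'a list list \<Rightarrow> bool" where
  "Atensor_eq \<phi> n \<equiv> tensor_eq (replicate n UNIV) (range \<phi>) (\<lambda>x r. x * r) (\<lambda>r x. r * x)"

abbreviation Atuples :: "nat \<Rightarrow> 'a list set" where
  "Atuples n \<equiv> tuples (replicate n (UNIV :: 'a set))"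

text \<open>Hom(_B A (x)_B ... (x)_B A, _B A): additive, left B-linear maps on the
  tensor power, represented as functions on formal sums respecting tensor_eq.\<close>
definition AT_hom :: "('b::ring_1 \<Rightarrow> 'a::ring_1) \<Rightarrow> nat \<Rightarrow> ('a list list \<Rightarrow> 'a) set" where
  "AT_hom \<phi> n = {h.
     (\<forall>l l'. Atensor_eq \<phi> n l l' \<longrightarrow> h l = h l') \<and>
     (\<forall>l l'. set l \<subseteq> Atuples n \<longrightarrow> set l' \<subseteq> Atuples n \<longrightarrow> h (l @ l') = h l + h l') \<and>
     (\<forall>b l. set l \<subseteq> Atuples n \<longrightarrow> h (map (\<lambda>x. x[0 := \<phi> b * x ! 0]) l) = \<phi> b * h l)}"

definition ractF :: "('a::ring_1 \<Rightarrow> 'a) \<Rightarrow> 'a \<Rightarrow> ('a \<Rightarrow> 'a)" where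
  "ractF \<alpha> r = (\<lambda>x. \<alpha> x * r)"
definition lactF :: "'a::ring_1 \<Rightarrow> ('a \<Rightarrow> 'a) \<Rightarrow> ('a \<Rightarrow> 'a)" where
  "lactF r f = (\<lambda>x. r * f x)"

definition eval_tensor :: "('a::ring_1 \<Rightarrow> 'a) list list \<Rightarrow> 'a list list \<Rightarrow> 'a" where
  "eval_tensor t l = sum_list [prod_list (map2 (\<lambda>f a. f a) y x). x \<leftarrow> l, y \<leftarrow> t]"

text \<open>The canonical map M_1 (x)_R ... (x)_R M_n \<rightarrow> Hom(_B A^{(x)n}, _B A) is well defined
  and an isomorphism (bijective; additivity is automatic).\<close>
definition tensor_hom_iso :: "('b::ring_1 \<Rightarrow> 'a::ring_1) \<Rightarrow> ('a \<Rightarrow> 'a) set list \<Rightarrow> bool" where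
  "tensor_hom_iso \<phi> Ms \<longleftrightarrow>
     (\<forall>t. set t \<subseteq> tuples Ms \<longrightarrow> eval_tensor t \<in> AT_hom \<phi> (length Ms)) \<and>
     (\<forall>t t'. set t \<subseteq> tuples Ms \<longrightarrow> set t' \<subseteq> tuples Ms \<longrightarrow>
        ((\<forall>l. set l \<subseteq> Atuples (length Ms) \<longrightarrow> eval_tensor t l = eval_tensor t' l)
         \<longleftrightarrow> tensor_eq Ms (Rset \<phi>) ractF lactF t t')) \<and>
     (\<forall>h \<in> AT_hom \<phi> (length Ms). \<exists>t. set t \<subseteq> tuples Ms \<and>
        (\<forall>l. set l \<subseteq> Atuples (length Ms) \<longrightarrow> h l = eval_tensor t l))"

text \<open>T = (A (x)_B A)^B\<close>
definition Tset :: "('b::ring_1 \<Rightarrow> 'a::ring_1) \<Rightarrow> 'a list list set" where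
  "Tset \<phi> = {u. set u \<subseteq> Atuples 2 \<and>
     (\<forall>b. Atensor_eq \<phi> 2 (map (\<lambda>x. [\<phi> b * x ! 0, x ! 1]) u) (map (\<lambda>x. [x ! 0, x ! 1 * \<phi> b]) u))}"

text \<open>Right D2 via a right D2 quasibase:
  a (x) a' = sum_j a gamma_j(a') u_j^1 (x) u_j^2.\<close>
definition right_D2 :: "('b::ring_1 \<Rightarrow> 'a::ring_1) \<Rightarrow> bool" where
  "right_D2 \<phi> \<longleftrightarrow> (\<exists>\<gamma>s us. length \<gamma>s = length us \<and> set \<gamma>s \<subseteq> Sset \<phi> \<and> set us \<subseteq> Tset \<phi> \<and>
     (\<forall>a a'. Atensor_eq \<phi> 2 [[a, a']]
        (concat (map2 (\<lambda>g u. map (\<lambda>x. [a * g a' * x ! 0, x ! 1]) u) \<gamma>s us))))"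

end

theory Submission
  imports Defs "HOL-Library.Multiset"
begin


lemma tensor_eq_tuples:
  assumes "tensor_eq Ms R ract lact l l'"
  shows "set l \<subseteq> tuples Ms \<and> set l' \<subseteq> tuples Ms"
  using assms by induction auto

lemma tensor_eq_sum_resp:
  fixes h :: "'x::ab_group_add list \<Rightarrow> 'y::comm_monoid_add"
  assumes "tensor_eq Ms R ract lact l l'"
  and add: "\<And>i x y. i < length Ms \<Longrightarrow> x \<in> tuples Ms \<Longrightarrow> y \<in> tuples Ms \<Longrightarrow> (\<forall>j. j\<noteq>i \<longrightarrow> x!j = y!j)
     \<Longrightarrow> x[i := x!i + y!i] \<in> tuples Ms \<Longrightarrow> h (x[i := x!i + y!i]) = h x + h y"
  and zero: "\<And>i x. i < length Ms \<Longrightarrow> x \<in> tuples Ms \<Longrightarrow> x!i = 0 \<Longrightarrow> h x = 0"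
  and bal: "\<And>i x r. Suc i < length Ms \<Longrightarrow> x \<in> tuples Ms \<Longrightarrow> r \<in> R
     \<Longrightarrow> x[i := ract (x ! i) r] \<in> tuples Ms \<Longrightarrow> x[Suc i := lact r (x ! Suc i)] \<in> tuples Ms
     \<Longrightarrow> h (x[i := ract (x!i) r]) = h (x[Suc i := lact r (x ! Suc i)])"
  shows "sum_list (map h l) = sum_list (map h l')"
  using assms(1)
proof induction
  case (swap x y) then show ?case by (simp add: add.commute)
next
  case (add i x y) then show ?case using assms(2) by simp
next
  case (zero i x) then show ?case using assms(3) by simp
next
  case (bal i x r) then show ?case using assms(4) by simp
qed auto

lemma tuples_Cons: "(g # y) \<in> tuples (M # Ms) \<longleftrightarrow> g \<in> M \<and> y \<in> tuples Ms"
  unfolding tuples_def by (auto simp: nth_Cons split: nat.splits)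

lemma tuples_Nil: "x \<in> tuples [] \<longleftrightarrow> x = []"
  unfolding tuples_def by auto

lemma Atuples_iff: "x \<in> Atuples n \<longleftrightarrow> length x = n"
  unfolding tuples_def by auto

lemma tensor_eq_Cons_map:
  assumes "tensor_eq Ms R ract lact t t'" and "g \<in> M"
  shows "tensor_eq (M # Ms) R ract lact (map ((#) g) t) (map ((#) g) t')"
  using assms(1)
proof induction
  case (refl l)
  have "set (map ((#) g) l) \<subseteq> tuples (M # Ms)" using refl assms(2) by (auto simp: tuples_Cons)
  then show ?case by (rule tensor_eq.refl)
next
  case (sym l l') then show ?case by (blast intro: tensor_eq.sym)
next
  case (trans l l' l'') then show ?case by (blast intro: tensor_eq.trans)
next
  case (app l1 l2 l3 l4) then show ?case using tensor_eq.app by fastforce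
next
  case (swap x y) then show ?case using assms(2) by (auto intro!: tensor_eq.swap simp: tuples_Cons)
next
  case (add i x y)
  have "tensor_eq (M # Ms) R ract lact [(g#x)[Suc i := (g#x)!Suc i + (g#y)!Suc i]] [g#x, g#y]"
    apply (rule tensor_eq.add)
    using add assms(2) by (auto simp: tuples_Cons nth_Cons split: nat.splits)
  then show ?case by simp
next
  case (zero i x)
  have "tensor_eq (M # Ms) R ract lact [g#x] []"
    apply (rule tensor_eq.zero[of "Suc i"])
    using zero assms(2) by (auto simp: tuples_Cons)
  then show ?case by simp
next
  case (bal i x r)
  have "tensor_eq (M # Ms) R ract lact [(g#x)[Suc i := ract ((g#x) ! Suc i) r]]
     [(g#x)[Suc (Suc i) := lact r ((g#x) ! Suc (Suc i))]]"
    apply (rule tensor_eq.bal)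
    using bal assms(2) by (auto simp: tuples_Cons)
  then show ?case by simp
qed

lemma tensor_eq_concat:
  assumes "\<And>p. p \<in> set ps \<Longrightarrow> tensor_eq Ms R ract lact (f p) (g p)"
  shows "tensor_eq Ms R ract lact (concat (map f ps)) (concat (map g ps))"
  using assms
proof (induction ps)
  case Nil then show ?case by (auto intro: tensor_eq.refl)
next
  case (Cons p ps) then show ?case using tensor_eq.app by fastforce
qed

lemma tensor_eq_map:
  assumes "\<And>p. p \<in> set ps \<Longrightarrow> tensor_eq Ms R ract lact [f p] [g p]"
  shows "tensor_eq Ms R ract lact (map f ps) (map g ps)"
  using tensor_eq_concat[of ps Ms R ract lact "\<lambda>p. [f p]" "\<lambda>p. [g p]"] assms
  by (simp add: map_concat[symmetric] concat_map_singleton)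

lemma tensor_eq_move:
  assumes "x \<in> tuples Ms" "set a \<subseteq> tuples Ms"
  shows "tensor_eq Ms R ract lact ([x] @ a) (a @ [x])"
  using assms(2)
proof (induction a)
  case Nil then show ?case using assms(1) by (auto intro: tensor_eq.refl)
next
  case (Cons c a)
  have 0: "tensor_eq Ms R ract lact [x, c] [c, x]" using Cons assms(1) by (auto intro!: tensor_eq.swap)
  have r: "tensor_eq Ms R ract lact a a" using Cons by (auto intro: tensor_eq.refl)
  have 1: "tensor_eq Ms R ract lact ([x, c] @ a) ([c, x] @ a)"
    by (rule tensor_eq.app[OF 0 r])
  have rc: "tensor_eq Ms R ract lact [c] [c]" using Cons by (auto intro: tensor_eq.refl)
  have 2: "tensor_eq Ms R ract lact ([c] @ ([x] @ a)) ([c] @ (a @ [x]))"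
    using Cons by (intro tensor_eq.app[OF rc]) auto
  show ?case using tensor_eq.trans[OF 1] 2 by simp
qed

lemma tensor_eq_perm:
  assumes "set l \<subseteq> tuples Ms" "mset l = mset l'"
  shows "tensor_eq Ms R ract lact l l'"
  using assms
proof (induction l arbitrary: l')
  case Nil then have "l' = []" by (metis mset_zero_iff_right mset.simps(1))
  then show ?case by (auto intro: tensor_eq.refl)
next
  case (Cons x xs)
  have "x \<in> set l'" using Cons.prems by (metis list.set_intros(1) set_mset_mset)
  then obtain a b where l': "l' = a @ x # b" by (meson split_list)
  have m: "mset xs = mset (a @ b)" using Cons.prems l' by simp
  have sab: "set (a @ b) \<subseteq> tuples Ms" using Cons.prems m by (metis set_mset_mset set_subset_Cons subset_trans)
  have xt: "x \<in> tuples Ms" using Cons.prems by auto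
  have rx: "tensor_eq Ms R ract lact [x] [x]" using xt by (auto intro: tensor_eq.refl)
  have ih: "tensor_eq Ms R ract lact xs (a @ b)" using Cons m by auto
  have 1: "tensor_eq Ms R ract lact ([x] @ xs) ([x] @ (a @ b))"
    by (rule tensor_eq.app[OF rx ih])
  have mv: "tensor_eq Ms R ract lact ([x] @ a) (a @ [x])" using sab xt by (intro tensor_eq_move) auto
  have rb: "tensor_eq Ms R ract lact b b" using sab by (auto intro: tensor_eq.refl)
  have 2: "tensor_eq Ms R ract lact (([x] @ a) @ b) ((a @ [x]) @ b)"
    by (rule tensor_eq.app[OF mv rb])
  show ?case using tensor_eq.trans[OF 1] 2 l' by simp
qed

lemma tensor_eq_pos:
  assumes "x \<in> tuples Ms" "i < length Ms" "set vs \<subseteq> Ms!i" "0 \<in> Ms!i"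
    "\<And>a b. a \<in> Ms!i \<Longrightarrow> b \<in> Ms!i \<Longrightarrow> a + b \<in> Ms!i"
  shows "tensor_eq Ms R ract lact [x[i := sum_list vs]] (map (\<lambda>v. x[i:=v]) vs)"
  using assms(3)
proof (induction vs)
  case Nil
  have "x[i := 0] \<in> tuples Ms" using assms unfolding tuples_def by (auto simp: nth_list_update)
  moreover have "x[i := 0] ! i = 0" using assms(1,2) unfolding tuples_def by simp
  ultimately show ?case using assms(2) by (auto intro!: tensor_eq.zero)
next
  case (Cons v vs)
  have sv: "sum_list vs \<in> Ms!i" using Cons.prems assms(4,5) by (induction vs) auto
  have t1: "x[i:=v] \<in> tuples Ms" and t2: "x[i:=sum_list vs] \<in> tuples Ms" and
     t3: "x[i := v + sum_list vs] \<in> tuples Ms"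
    using assms Cons.prems sv unfolding tuples_def by (auto simp: nth_list_update)
  have 1: "tensor_eq Ms R ract lact [(x[i:=v])[i := (x[i:=v])!i + (x[i:=sum_list vs])!i]] [x[i:=v], x[i:=sum_list vs]]"
    apply (rule tensor_eq.add) using t1 t2 t3 assms(1,2) unfolding tuples_def by (auto simp: nth_list_update)
  have rv: "tensor_eq Ms R ract lact [x[i:=v]] [x[i:=v]]" using t1 by (auto intro: tensor_eq.refl)
  have 2: "tensor_eq Ms R ract lact ([x[i:=v]] @ [x[i:=sum_list vs]]) ([x[i:=v]] @ map (\<lambda>v. x[i:=v]) vs)"
    using Cons by (intro tensor_eq.app[OF rv]) auto
  have li: "i < length x" using assms(1,2) unfolding tuples_def by simp
  show ?case using tensor_eq.trans[OF 1] 2 li by simp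
qed



definition pv :: "('a::ring_1 \<Rightarrow> 'a) list \<Rightarrow> 'a list \<Rightarrow> 'a" where
  "pv y x = prod_list (map2 (\<lambda>f a. f a) y x)"

lemma pv_Cons[simp]: "pv (f # y) (a # x) = f a * pv y x"
  by (simp add: pv_def)
lemma pv_Nil[simp]: "pv [] x = 1"
  by (simp add: pv_def)

lemma sum_list_swap:
  fixes f :: "'x \<Rightarrow> 'y \<Rightarrow> 'z::comm_monoid_add"
  shows "sum_list (map (\<lambda>x. sum_list (map (f x) ys)) xs) = sum_list (map (\<lambda>y. sum_list (map (\<lambda>x. f x y) xs)) ys)"
  by (induction xs) (simp_all add: sum_list_addf)

lemma sum_list_concat_map:
  "sum_list (concat (map f xs)) = sum_list (map (\<lambda>x. sum_list (f x)) xs)"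
  by (induction xs) auto

lemma eval_E1: "eval_tensor t l = sum_list (map (\<lambda>x. sum_list (map (\<lambda>y. pv y x) t)) l)"
  unfolding eval_tensor_def pv_def by (induction l) auto

lemma eval_E2: "eval_tensor t l = sum_list (map (\<lambda>y. sum_list (map (\<lambda>x. pv y x) l)) t)"
  unfolding eval_E1 by (rule sum_list_swap)

lemma eval_append: "eval_tensor t (l @ l') = eval_tensor t l + eval_tensor t l'"
  unfolding eval_E1 by simp

lemma prod_list_upd_add:
  fixes xs :: "'a::ring_1 list"
  shows "i < length xs \<Longrightarrow> prod_list (xs[i := a + b]) = prod_list (xs[i := a]) + prod_list (xs[i := b])"
proof (induction xs arbitrary: i)
  case Nil then show ?case by simp
next
  case (Cons c xs) then show ?case by (cases i) (auto simp: algebra_simps)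
qed

lemma prod_list_upd_bal:
  fixes xs :: "'a::ring_1 list"
  shows "Suc i < length xs \<Longrightarrow> prod_list (xs[i := xs!i * r]) = prod_list (xs[Suc i := r * xs!Suc i])"
proof (induction xs arbitrary: i)
  case Nil then show ?case by simp
next
  case (Cons c xs)
  show ?case
  proof (cases i)
    case 0
    then obtain d ys where "xs = d # ys" using Cons.prems by (cases xs) auto
    then show ?thesis using 0 by (simp add: mult.assoc)
  next
    case (Suc j) then show ?thesis using Cons by auto
  qed
qed

lemma prod_list_upd0:
  fixes xs :: "'a::ring_1 list"
  shows "xs \<noteq> [] \<Longrightarrow> prod_list (xs[0 := c * xs!0]) = c * prod_list xs"
  by (cases xs) (auto simp: mult.assoc)

lemma prod_list_zero:
  fixes xs :: "'a::ring_1 list"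
  shows "0 \<in> set xs \<Longrightarrow> prod_list xs = 0"
  by (induction xs) auto

lemma map2_upd_fun:
  "length y = length x \<Longrightarrow> map2 (\<lambda>f a. f a) (y[i := g]) x = (map2 (\<lambda>f a. f a) y x)[i := g (x!i)]"
  by (cases "i < length x"; rule nth_equalityI) (auto simp: nth_list_update nth_zip list_update_beyond)

lemma map2_upd_arg:
  "length y = length x \<Longrightarrow> map2 (\<lambda>f a. f a) y (x[i := v]) = (map2 (\<lambda>f a. f a) y x)[i := (y!i) v]"
  by (cases "i < length x"; rule nth_equalityI) (auto simp: nth_list_update nth_zip list_update_beyond)

lemma nth_map2_app: "i < length y \<Longrightarrow> length y = length x \<Longrightarrow> (map2 (\<lambda>f a. f a) y x) ! i = (y!i) (x!i)"
  by simp

lemma additive_zero: "additive f \<Longrightarrow> f 0 = 0"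
  unfolding additive_def by (metis add_cancel_right_right)

definition MS :: "('b::ring_1 \<Rightarrow> 'a::ring_1) \<Rightarrow> nat \<Rightarrow> ('a \<Rightarrow> 'a) set list" where
  "MS \<phi> k = replicate k (Sset \<phi>) @ [Eset \<phi>]"

lemma MS_length[simp]: "length (MS \<phi> k) = Suc k"
  by (simp add: MS_def)

lemma MS_Suc: "MS \<phi> (Suc k) = Sset \<phi> # MS \<phi> k"
  by (simp add: MS_def)

lemma MS_nth_S: "i < k \<Longrightarrow> MS \<phi> k ! i = Sset \<phi>"
  by (simp add: MS_def nth_append)

lemma MS_nth_E: "MS \<phi> k ! k = Eset \<phi>"
  by (simp add: MS_def nth_append)

lemma MS_nth: "i < Suc k \<Longrightarrow> MS \<phi> k ! i = (if i < k then Sset \<phi> else Eset \<phi>)"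
  by (simp add: MS_def nth_append)

lemma MS_elem:
  assumes "i < Suc k" "f \<in> MS \<phi> k ! i"
  shows "additive f \<and> (\<forall>b x. f (\<phi> b * x) = \<phi> b * f x)"
  using assms by (auto simp: MS_nth Sset_def Eset_def split: if_splits)

lemma S_zero: "0 \<in> Sset \<phi>" by (simp add: Sset_def additive_def)
lemma E_zero: "0 \<in> Eset \<phi>" by (simp add: Eset_def additive_def)
lemma S_add: "a \<in> Sset \<phi> \<Longrightarrow> b \<in> Sset \<phi> \<Longrightarrow> a + b \<in> Sset \<phi>"
  by (simp add: Sset_def additive_def algebra_simps)
lemma E_add: "a \<in> Eset \<phi> \<Longrightarrow> b \<in> Eset \<phi> \<Longrightarrow> a + b \<in> Eset \<phi>"
  by (simp add: Eset_def additive_def algebra_simps)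
lemma S_lact: "r \<in> Rset \<phi> \<Longrightarrow> a \<in> Sset \<phi> \<Longrightarrow> lactF r a \<in> Sset \<phi>"
  by (simp add: Sset_def Rset_def lactF_def additive_def algebra_simps) (metis mult.assoc)
lemma E_lact: "r \<in> Rset \<phi> \<Longrightarrow> a \<in> Eset \<phi> \<Longrightarrow> lactF r a \<in> Eset \<phi>"
  by (simp add: Eset_def Rset_def lactF_def additive_def algebra_simps) (metis mult.assoc)
lemma S_ract: "r \<in> Rset \<phi> \<Longrightarrow> a \<in> Sset \<phi> \<Longrightarrow> ractF a r \<in> Sset \<phi>"
  by (simp add: Sset_def Rset_def ractF_def additive_def algebra_simps)

lemma MS_zero: "i < Suc k \<Longrightarrow> 0 \<in> MS \<phi> k ! i"
  by (simp add: MS_nth S_zero E_zero)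
lemma MS_add: "i < Suc k \<Longrightarrow> a \<in> MS \<phi> k ! i \<Longrightarrow> b \<in> MS \<phi> k ! i \<Longrightarrow> a + b \<in> MS \<phi> k ! i"
  by (auto simp: MS_nth S_add E_add split: if_splits)
lemma MS_lact: "i < Suc k \<Longrightarrow> r \<in> Rset \<phi> \<Longrightarrow> a \<in> MS \<phi> k ! i \<Longrightarrow> lactF r a \<in> MS \<phi> k ! i"
  by (auto simp: MS_nth S_lact E_lact split: if_splits)

lemma tuples_length: "x \<in> tuples Ms \<Longrightarrow> length x = length Ms"
  by (simp add: tuples_def)
lemma tuples_nth: "x \<in> tuples Ms \<Longrightarrow> i < length Ms \<Longrightarrow> x ! i \<in> Ms ! i"
  by (simp add: tuples_def)



lemma upd_same_eq: "length x = length x' \<Longrightarrow> (\<forall>j. j \<noteq> i \<longrightarrow> x!j = x'!j) \<Longrightarrow> x' = x[i := x'!i]"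
  by (cases "i < length x"; rule nth_equalityI) (auto simp: nth_list_update list_update_beyond)

lemma pv_add_A:
  assumes "length y = length x" "length x' = length x" "i < length x" "\<forall>j. j \<noteq> i \<longrightarrow> x!j = x'!j"
    "additive (y!i)"
  shows "pv y (x[i := x!i + x'!i]) = pv y x + pv y x'"
proof -
  let ?m = "map2 (\<lambda>f a. f a) y x"
  have x': "x' = x[i := x'!i]" using assms upd_same_eq by metis
  have "pv y (x[i := x!i + x'!i]) = prod_list (?m[i := (y!i) (x!i) + (y!i) (x'!i)])"
    using assms(1,5) unfolding pv_def additive_def by (simp add: map2_upd_arg)
  also have "\<dots> = prod_list (?m[i := (y!i) (x!i)]) + prod_list (?m[i := (y!i) (x'!i)])"
    using assms by (intro prod_list_upd_add) simp
  also have "?m[i := (y!i) (x!i)] = ?m"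
  proof -
    have "?m ! i = (y!i) (x!i)" using assms by simp
    then show ?thesis by (metis list_update_id)
  qed
  also have "prod_list (?m[i := (y!i) (x'!i)]) = pv y x'"
    using assms(1) x' unfolding pv_def by (metis map2_upd_arg)
  finally show ?thesis by (simp add: pv_def)
qed

lemma pv_zero_A:
  assumes "length y = length x" "i < length x" "x!i = 0" "additive (y!i)"
  shows "pv y x = 0"
proof -
  have "(map2 (\<lambda>f a. f a) y x) ! i = 0" using assms additive_zero by (simp)
  then have "0 \<in> set (map2 (\<lambda>f a. f a) y x)" using assms by (metis length_map length_zip min.idem nth_mem)
  then show ?thesis unfolding pv_def by (rule prod_list_zero)
qed

lemma pv_bal_A:
  assumes "length y = length x" "Suc i < length x" "\<forall>z. (y!i) (z * c) = (y!i) z * c"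
    "\<forall>z. (y!Suc i) (c * z) = c * (y!Suc i) z"
  shows "pv y (x[i := x!i * c]) = pv y (x[Suc i := c * x!Suc i])"
proof -
  let ?m = "map2 (\<lambda>f a. f a) y x"
  have "pv y (x[i := x!i * c]) = prod_list (?m[i := ?m!i * c])"
    using assms unfolding pv_def by (simp add: map2_upd_arg)
  also have "\<dots> = prod_list (?m[Suc i := c * ?m!Suc i])"
    using assms by (intro prod_list_upd_bal) simp
  also have "\<dots> = pv y (x[Suc i := c * x!Suc i])"
    using assms unfolding pv_def by (simp add: map2_upd_arg)
  finally show ?thesis .
qed

lemma pv_lin_A:
  assumes "length y = length x" "x \<noteq> []" "(y!0) (c * x!0) = c * (y!0) (x!0)"
  shows "pv y (x[0 := c * x!0]) = c * pv y x"
proof -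
  let ?m = "map2 (\<lambda>f a. f a) y x"
  have "y \<noteq> []" using assms by auto
  have "pv y (x[0 := c * x!0]) = prod_list (?m[0 := c * ?m!0])"
    using assms unfolding pv_def by (simp add: map2_upd_arg)
  also have "\<dots> = c * pv y x" using assms \<open>y \<noteq> []\<close> unfolding pv_def by (intro prod_list_upd0) simp
  finally show ?thesis .
qed

lemma pv_add_T:
  assumes "length y = length x" "length y' = length x" "i < length x" "\<forall>j. j \<noteq> i \<longrightarrow> y!j = y'!j"
  shows "pv (y[i := y!i + y'!i]) x = pv y x + pv y' x"
proof -
  let ?m = "map2 (\<lambda>f a. f a) y x"
  have y': "y' = y[i := y'!i]" using assms upd_same_eq by metis
  have "pv (y[i := y!i + y'!i]) x = prod_list (?m[i := (y!i) (x!i) + (y'!i) (x!i)])"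
    using assms(1) unfolding pv_def by (simp add: map2_upd_fun)
  also have "\<dots> = prod_list (?m[i := (y!i) (x!i)]) + prod_list (?m[i := (y'!i) (x!i)])"
    using assms by (intro prod_list_upd_add) simp
  also have "?m[i := (y!i) (x!i)] = ?m"
  proof -
    have "?m ! i = (y!i) (x!i)" using assms by simp
    then show ?thesis by (metis list_update_id)
  qed
  also have "prod_list (?m[i := (y'!i) (x!i)]) = pv y' x"
    using assms(1) y' unfolding pv_def by (metis map2_upd_fun)
  finally show ?thesis by (simp add: pv_def plus_fun_def)
qed

lemma pv_zero_T:
  assumes "length y = length x" "i < length x" "y!i = 0"
  shows "pv y x = 0"
proof -
  have "(map2 (\<lambda>f a. f a) y x) ! i = 0" using assms by simp
  then have "0 \<in> set (map2 (\<lambda>f a. f a) y x)" using assms by (metis length_map length_zip min.idem nth_mem)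
  then show ?thesis unfolding pv_def by (rule prod_list_zero)
qed

lemma pv_bal_T:
  assumes "length y = length x" "Suc i < length x"
  shows "pv (y[i := ractF (y!i) r]) x = pv (y[Suc i := lactF r (y!Suc i)]) x"
proof -
  let ?m = "map2 (\<lambda>f a. f a) y x"
  have "pv (y[i := ractF (y!i) r]) x = prod_list (?m[i := ?m!i * r])"
    using assms unfolding pv_def by (simp add: map2_upd_fun ractF_def)
  also have "\<dots> = prod_list (?m[Suc i := r * ?m!Suc i])"
    using assms by (intro prod_list_upd_bal) simp
  also have "\<dots> = pv (y[Suc i := lactF r (y!Suc i)]) x"
    using assms unfolding pv_def by (simp add: map2_upd_fun lactF_def)
  finally show ?thesis .
qed



lemma Atuples_iff2: "x \<in> tuples (UNIV # replicate k UNIV) \<longleftrightarrow> length x = Suc k"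
  using Atuples_iff[of x "Suc k"] by simp

lemma eval_resp_A:
  fixes \<phi> :: "'b::ring_1 \<Rightarrow> 'a::ring_1"
  assumes t: "set t \<subseteq> tuples (MS \<phi> k)" and e: "Atensor_eq \<phi> (Suc k) l l'"
  shows "eval_tensor t l = eval_tensor t l'"
  unfolding eval_E1
proof (rule tensor_eq_sum_resp[OF e])
  have yl: "\<And>y. y \<in> set t \<Longrightarrow> length y = Suc k" using t by (auto simp: tuples_def)
  have yel: "\<And>y i. y \<in> set t \<Longrightarrow> i < Suc k \<Longrightarrow> additive (y!i) \<and> (\<forall>b x. (y!i) (\<phi> b * x) = \<phi> b * (y!i) x)"
    using t by (intro MS_elem) (auto simp: tuples_def)
  fix i and x y :: "'a list"
  assume a: "i < length (replicate (Suc k) (UNIV::'a set))" "x \<in> Atuples (Suc k)" "y \<in> Atuples (Suc k)"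
    "\<forall>j. j \<noteq> i \<longrightarrow> x ! j = y ! j"
  have "\<And>z. z \<in> set t \<Longrightarrow> pv z (x[i := x ! i + y ! i]) = pv z x + pv z y"
    using a yl yel by (intro pv_add_A) (auto simp: Atuples_iff Atuples_iff2)
  then show "(\<Sum>z\<leftarrow>t. pv z (x[i := x ! i + y ! i])) = (\<Sum>z\<leftarrow>t. pv z x) + (\<Sum>z\<leftarrow>t. pv z y)"
    by (simp add: sum_list_addf[symmetric] cong: map_cong)
next
  have yl: "\<And>y. y \<in> set t \<Longrightarrow> length y = Suc k" using t by (auto simp: tuples_def)
  have yel: "\<And>y i. y \<in> set t \<Longrightarrow> i < Suc k \<Longrightarrow> additive (y!i) \<and> (\<forall>b x. (y!i) (\<phi> b * x) = \<phi> b * (y!i) x)"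
    using t by (intro MS_elem) (auto simp: tuples_def)
  fix i and x :: "'a list"
  assume a: "i < length (replicate (Suc k) (UNIV::'a set))" "x \<in> Atuples (Suc k)" "x ! i = 0"
  have "\<And>z. z \<in> set t \<Longrightarrow> pv z x = 0"
    using a yl yel by (intro pv_zero_A[of _ _ i]) (auto simp: Atuples_iff Atuples_iff2)
  then show "(\<Sum>z\<leftarrow>t. pv z x) = 0" by (simp cong: map_cong)
next
  have yl: "\<And>y. y \<in> set t \<Longrightarrow> length y = Suc k" using t by (auto simp: tuples_def)
  have yel: "\<And>y i. y \<in> set t \<Longrightarrow> i < Suc k \<Longrightarrow> additive (y!i) \<and> (\<forall>b x. (y!i) (\<phi> b * x) = \<phi> b * (y!i) x)"
    using t by (intro MS_elem) (auto simp: tuples_def)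
  have yS: "\<And>y i. y \<in> set t \<Longrightarrow> i < k \<Longrightarrow> y!i \<in> Sset \<phi>"
    using t by (metis MS_length MS_nth_S in_mono less_SucI tuples_nth)
  fix i and x :: "'a list" and r
  assume a: "Suc i < length (replicate (Suc k) (UNIV::'a set))" "x \<in> Atuples (Suc k)" "r \<in> range \<phi>"
  then obtain b where r: "r = \<phi> b" by auto
  have "\<And>z. z \<in> set t \<Longrightarrow> pv z (x[i := x ! i * r]) = pv z (x[Suc i := r * x ! Suc i])"
  proof -
    fix z assume z: "z \<in> set t"
    have "z!i \<in> Sset \<phi>" using yS z a by simp
    then have 1: "\<forall>w. (z!i) (w * r) = (z!i) w * r" using r by (simp add: Sset_def)
    have 2: "\<forall>w. (z!Suc i) (r * w) = r * (z!Suc i) w" using yel[OF z, of "Suc i"] a r by simp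
    show "pv z (x[i := x ! i * r]) = pv z (x[Suc i := r * x ! Suc i])"
      using a yl[OF z] 1 2 by (intro pv_bal_A) (auto simp: Atuples_iff Atuples_iff2)
  qed
  then show "(\<Sum>z\<leftarrow>t. pv z (x[i := x ! i * r])) = (\<Sum>z\<leftarrow>t. pv z (x[Suc i := r * x ! Suc i]))"
    by (simp cong: map_cong)
qed

lemma eval_in_AT:
  fixes \<phi> :: "'b::ring_1 \<Rightarrow> 'a::ring_1"
  assumes t: "set t \<subseteq> tuples (MS \<phi> k)"
  shows "eval_tensor t \<in> AT_hom \<phi> (Suc k)"
proof -
  have yl: "\<And>y. y \<in> set t \<Longrightarrow> length y = Suc k" using t by (auto simp: tuples_def)
  have yel: "\<And>y i. y \<in> set t \<Longrightarrow> i < Suc k \<Longrightarrow> additive (y!i) \<and> (\<forall>b x. (y!i) (\<phi> b * x) = \<phi> b * (y!i) x)"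
    using t by (intro MS_elem) (auto simp: tuples_def)
  have lin: "eval_tensor t (map (\<lambda>x. x[0 := \<phi> b * x ! 0]) l) = \<phi> b * eval_tensor t l"
    if l: "set l \<subseteq> Atuples (Suc k)" for b l
  proof -
    have "\<And>x z. x \<in> set l \<Longrightarrow> z \<in> set t \<Longrightarrow> pv z (x[0 := \<phi> b * x ! 0]) = \<phi> b * pv z x"
      using l yl yel by (intro pv_lin_A) (auto simp: Atuples_iff Atuples_iff2)
    then show ?thesis unfolding eval_E1
      by (simp add: sum_list_const_mult[symmetric] o_def cong: map_cong)
  qed
  show ?thesis unfolding AT_hom_def
    using eval_resp_A[OF t] eval_append lin by blast
qed

lemma eval_resp_T:
  fixes \<phi> :: "'b::ring_1 \<Rightarrow> 'a::ring_1"
  assumes e: "tensor_eq (MS \<phi> k) (Rset \<phi>) ractF lactF t t'" and l: "set l \<subseteq> Atuples (Suc k)"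
  shows "eval_tensor t l = eval_tensor t' l"
  unfolding eval_E2
proof (rule tensor_eq_sum_resp[OF e])
  have xl: "\<And>x. x \<in> set l \<Longrightarrow> length x = Suc k" using l by (auto simp: Atuples_iff Atuples_iff2)
  fix i x y
  assume a: "i < length (MS \<phi> k)" "x \<in> tuples (MS \<phi> k)" "y \<in> tuples (MS \<phi> k)"
    "\<forall>j. j \<noteq> i \<longrightarrow> x ! j = y ! j"
  have "\<And>z. z \<in> set l \<Longrightarrow> pv (x[i := x ! i + y ! i]) z = pv x z + pv y z"
    using a xl by (intro pv_add_T) (auto simp: tuples_def)
  then show "(\<Sum>z\<leftarrow>l. pv (x[i := x ! i + y ! i]) z) = (\<Sum>z\<leftarrow>l. pv x z) + (\<Sum>z\<leftarrow>l. pv y z)"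
    by (simp add: sum_list_addf[symmetric] cong: map_cong)
next
  have xl: "\<And>x. x \<in> set l \<Longrightarrow> length x = Suc k" using l by (auto simp: Atuples_iff Atuples_iff2)
  fix i x
  assume a: "i < length (MS \<phi> k)" "x \<in> tuples (MS \<phi> k)" "x ! i = 0"
  have "\<And>z. z \<in> set l \<Longrightarrow> pv x z = 0"
    using a xl by (intro pv_zero_T[of _ _ i]) (auto simp: tuples_def)
  then show "(\<Sum>z\<leftarrow>l. pv x z) = 0" by (simp cong: map_cong)
next
  have xl: "\<And>x. x \<in> set l \<Longrightarrow> length x = Suc k" using l by (auto simp: Atuples_iff Atuples_iff2)
  fix i x r
  assume a: "Suc i < length (MS \<phi> k)" "x \<in> tuples (MS \<phi> k)"
  have "\<And>z. z \<in> set l \<Longrightarrow> pv (x[i := ractF (x ! i) r]) z = pv (x[Suc i := lactF r (x ! Suc i)]) z"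
    using a xl by (intro pv_bal_T) (auto simp: tuples_def)
  then show "(\<Sum>z\<leftarrow>l. pv (x[i := ractF (x ! i) r]) z) = (\<Sum>z\<leftarrow>l. pv (x[Suc i := lactF r (x ! Suc i)]) z)"
    by (simp cong: map_cong)
qed



lemma AT_nil: "F \<in> AT_hom \<phi> n \<Longrightarrow> F [] = 0"
proof -
  assume "F \<in> AT_hom \<phi> n"
  then have "\<forall>l l'. set l \<subseteq> Atuples n \<longrightarrow> set l' \<subseteq> Atuples n \<longrightarrow> F (l @ l') = F l + F l'"
    unfolding AT_hom_def by blast
  then have "F ([] @ []) = F [] + F []" by (metis empty_set empty_subsetI)
  then show ?thesis by simp
qed

lemma AT_resp: "F \<in> AT_hom \<phi> n \<Longrightarrow> Atensor_eq \<phi> n l l' \<Longrightarrow> F l = F l'"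
  unfolding AT_hom_def by blast

lemma AT_app: "F \<in> AT_hom \<phi> n \<Longrightarrow> set l \<subseteq> Atuples n \<Longrightarrow> set l' \<subseteq> Atuples n \<Longrightarrow> F (l @ l') = F l + F l'"
  unfolding AT_hom_def by blast

lemma AT_sum: "F \<in> AT_hom \<phi> n \<Longrightarrow> set l \<subseteq> Atuples n \<Longrightarrow> F l = sum_list (map (\<lambda>x. F [x]) l)"
proof (induction l)
  case Nil then show ?case by (simp add: AT_nil)
next
  case (Cons x l)
  have "F (x # l) = F ([x] @ l)" by simp
  also have "\<dots> = F [x] + F l" using Cons.prems by (intro AT_app) auto
  finally show ?case using Cons by simp
qed

lemma AT_lin1:
  assumes "F \<in> AT_hom \<phi> n" "length x = n"
  shows "F [x[0 := \<phi> b * x ! 0]] = \<phi> b * F [x]"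
proof -
  have "set [x] \<subseteq> Atuples n" using assms(2) by (simp add: Atuples_iff)
  then have "F (map (\<lambda>x. x[0 := \<phi> b * x ! 0]) [x]) = \<phi> b * F [x]"
    using assms(1) unfolding AT_hom_def by blast
  then show ?thesis by simp
qed



lemma two_list: "length x = 2 \<Longrightarrow> x = [x!0, x!1]"
  by (cases x; cases "tl x") auto

lemma L2:
  fixes \<phi> :: "'b::ring_1 \<Rightarrow> 'a::ring_1"
  assumes P: "\<And>y y'. P (y + y') = P y + P y'" "\<And>b y. P (\<phi> b * y) = \<phi> b * P y"
    and e: "Atensor_eq \<phi> 2 w w'"
  shows "sum_list (map (\<lambda>x. x!0 * P (x!1)) w) = sum_list (map (\<lambda>x. x!0 * P (x!1)) w')"
proof (rule tensor_eq_sum_resp[OF e])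
  have P0: "P 0 = 0" using P(1)[of 0 0] by simp
  {
    fix i and x y :: "'a list"
    assume a: "i < length (replicate 2 (UNIV::'a set))" "x \<in> Atuples 2" "y \<in> Atuples 2"
      "\<forall>j. j \<noteq> i \<longrightarrow> x ! j = y ! j"
    have x: "x = [x!0, x!1]" using a(2) two_list Atuples_iff by blast
    have y: "y = [y!0, y!1]" using a(3) two_list Atuples_iff by blast
    have "i = 0 \<or> i = 1" using a by auto
    then show "x[i := x ! i + y ! i] ! 0 * P (x[i := x ! i + y ! i] ! 1) = x ! 0 * P (x ! 1) + y ! 0 * P (y ! 1)"
    proof
      assume i: "i = 0"
      have "x[i := x ! i + y ! i] = [x!0 + y!0, x!1]" using x i by (metis list_update_code(2))
      then show ?thesis using a(4) i by (simp add: distrib_right)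
    next
      assume i: "i = 1"
      have "x[i := x ! i + y ! i] = [x!0, x!1 + y!1]" using x i
        by (metis One_nat_def list_update_code(2) list_update_code(3))
      then show ?thesis using a(4) i P(1) by (simp add: distrib_left)
    qed
  }
  {
    fix i and x :: "'a list"
    assume a: "i < length (replicate 2 (UNIV::'a set))" "x \<in> Atuples 2" "x ! i = 0"
    have "i = 0 \<or> i = 1" using a by auto
    then show "x ! 0 * P (x ! 1) = 0" using a P0 by auto
  }
  {
    fix i and x :: "'a list" and r
    assume a: "Suc i < length (replicate 2 (UNIV::'a set))" "x \<in> Atuples 2" "r \<in> range \<phi>"
    then obtain b where r: "r = \<phi> b" by auto
    have x: "x = [x!0, x!1]" using a(2) two_list Atuples_iff by blast
    have i: "i = 0" using a by auto
    have 1: "x[i := x ! i * r] = [x!0 * r, x!1]" using x i by (metis list_update_code(2))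
    have 2: "x[Suc i := r * x ! Suc i] = [x!0, r * x!1]" using x i
        by (metis One_nat_def list_update_code(2) list_update_code(3) nth_Cons_Suc)
    show "x[i := x ! i * r] ! 0 * P (x[i := x ! i * r] ! 1) =
          x[Suc i := r * x ! Suc i] ! 0 * P (x[Suc i := r * x ! Suc i] ! 1)"
      unfolding 1 2 using r P(2) by (simp add: mult.assoc)
  }
qed



definition rr :: "'a::ring_1 list list \<Rightarrow> ('a \<Rightarrow> 'a) \<Rightarrow> 'a" where
  "rr u P = sum_list (map (\<lambda>x. x!0 * P (x!1)) u)"

definition Gj :: "'a::ring_1 list list \<Rightarrow> ('a list list \<Rightarrow> 'a) \<Rightarrow> ('a list list \<Rightarrow> 'a)" where
  "Gj u F = (\<lambda>l. sum_list (map (\<lambda>z. rr u (\<lambda>y. F [y # z])) l))"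

fun Psi :: "('a::ring_1 \<Rightarrow> 'a) list \<Rightarrow> 'a list list list \<Rightarrow> nat \<Rightarrow> ('a list list \<Rightarrow> 'a) \<Rightarrow> ('a \<Rightarrow> 'a) list list" where
  "Psi gs us 0 F = [[\<lambda>a. F [[a]]]]"
| "Psi gs us (Suc k) F = concat (map (\<lambda>(g,u). map ((#) g) (Psi gs us k (Gj u F))) (zip gs us))"

lemma sum_list_map_concat: "sum_list (map h (concat xs)) = sum_list (map (\<lambda>x. sum_list (map h x)) xs)"
  by (induction xs) auto

lemma sum_list_fun_apply: "(sum_list fs) a = sum_list (map (\<lambda>f. f a) fs)"
  by (induction fs) auto

lemma Atuples_eq: "tuples (replicate n UNIV) = {x. length x = n}"
  by (auto simp: Atuples_iff)
lemma Atuples_eq2: "tuples (UNIV # replicate n UNIV) = {x. length x = Suc n}"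
  using Atuples_eq[of "Suc n"] by simp

lemma Atuples_eq3: "tuples (UNIV # UNIV # replicate n UNIV) = {x. length x = Suc (Suc n)}"
  using Atuples_eq[of "Suc (Suc n)"] by simp

lemma AT_P_add:
  assumes "F \<in> AT_hom \<phi> (Suc m)" "length z = m"
  shows "F [(y + y') # z] = F [y # z] + F [y' # z]"
proof -
  have "Atensor_eq \<phi> (Suc m) [(y # z)[0 := (y#z)!0 + (y'#z)!0]] [y # z, y' # z]"
    by (rule tensor_eq.add) (use assms(2) in \<open>auto simp: Atuples_iff Atuples_iff2 nth_Cons split: nat.splits\<close>)
  then have "F [(y + y') # z] = F ([y # z] @ [y' # z])" using AT_resp[OF assms(1)] by simp
  also have "\<dots> = F [y # z] + F [y' # z]" using assms by (intro AT_app) (auto simp: Atuples_eq Atuples_eq2)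
  finally show ?thesis .
qed

lemma AT_P_lin:
  assumes "F \<in> AT_hom \<phi> (Suc m)" "length z = m"
  shows "F [(\<phi> b * y) # z] = \<phi> b * F [y # z]"
  using AT_lin1[OF assms(1), of "y # z" b] assms(2) by simp

lemma tuples_upd: "x \<in> tuples Ms \<Longrightarrow> v \<in> Ms ! i \<Longrightarrow> x[i := v] \<in> tuples Ms"
  by (cases "i < length x") (auto simp: tuples_def nth_list_update list_update_beyond)

lemma mset_swap_aux: "mset (concat (map (\<lambda>y. a y # b y) t)) = mset (map a t) + mset (concat (map b t))"
  by (induction t) auto

lemma mset_swap: "mset (concat (map (\<lambda>p. map (f p) t) ps)) = mset (concat (map (\<lambda>y. map (\<lambda>p. f p y) ps) t))"
proof (induction ps)
  case Nil then show ?case by (induction t) auto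
next
  case (Cons p ps) then show ?case by (simp add: mset_swap_aux)
qed

locale qb =
  fixes \<phi> :: "'b::ring_1 \<Rightarrow> 'a::ring_1" and gs :: "('a \<Rightarrow> 'a) list" and us :: "'a list list list"
  assumes len: "length gs = length us" and gsS: "set gs \<subseteq> Sset \<phi>" and usT: "set us \<subseteq> Tset \<phi>"
    and base: "\<forall>a a'. Atensor_eq \<phi> 2 [[a, a']]
        (concat (map2 (\<lambda>g u. map (\<lambda>x. [a * g a' * x ! 0, x ! 1]) u) gs us))"
begin

lemma Q1:
  assumes P: "\<And>y y'. P (y + y') = P y + P y'" "\<And>b y. P (\<phi> b * y) = \<phi> b * P y"
  shows "P a = sum_list (map (\<lambda>(g,u). g a * rr u P) (zip gs us))"
proof -
  have "sum_list (map (\<lambda>x. x!0 * P (x!1)) [[1, a]]) =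
    sum_list (map (\<lambda>x. x!0 * P (x!1)) (concat (map2 (\<lambda>g u. map (\<lambda>x. [1 * g a * x ! 0, x ! 1]) u) gs us)))"
    using L2[where \<phi>=\<phi> and P=P, OF P] base by blast
  then show ?thesis
    unfolding split_def by (simp add: sum_list_map_concat rr_def o_def sum_list_const_mult[symmetric] mult.assoc)
qed

end



lemma rr_add: "(\<And>w. w \<in> set u \<Longrightarrow> P (w!1) = Q (w!1) + Q' (w!1)) \<Longrightarrow> rr u P = rr u Q + rr u Q'"
  unfolding rr_def by (induction u) (auto simp: algebra_simps)

lemma rr_cong: "(\<And>w. w \<in> set u \<Longrightarrow> P (w!1) = Q (w!1)) \<Longrightarrow> rr u P = rr u Q"
  unfolding rr_def by (induction u) auto

lemma rr_zero: "(\<And>w. w \<in> set u \<Longrightarrow> P (w!1) = 0) \<Longrightarrow> rr u P = 0"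
  unfolding rr_def by (induction u) auto

lemma Gj_app: "Gj u F (l @ l') = Gj u F l + Gj u F l'"
  unfolding Gj_def by simp

context qb begin

lemma Q2:
  assumes u: "u \<in> Tset \<phi>" and a: "\<alpha> \<in> Sset \<phi>"
  shows "rr u \<alpha> \<in> Rset \<phi>"
proof -
  have P1: "\<And>y y'. \<alpha> (y + y') = \<alpha> y + \<alpha> y'" and P2: "\<And>b y. \<alpha> (\<phi> b * y) = \<phi> b * \<alpha> y"
    and P3: "\<And>b y. \<alpha> (y * \<phi> b) = \<alpha> y * \<phi> b"
    using a by (auto simp: Sset_def additive_def)
  have "rr u \<alpha> * \<phi> b = \<phi> b * rr u \<alpha>" for b
  proof -
    have e: "Atensor_eq \<phi> 2 (map (\<lambda>x. [\<phi> b * x ! 0, x ! 1]) u) (map (\<lambda>x. [x ! 0, x ! 1 * \<phi> b]) u)"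
      using u by (simp add: Tset_def)
    have "sum_list (map (\<lambda>x. x!0 * \<alpha> (x!1)) (map (\<lambda>x. [\<phi> b * x ! 0, x ! 1]) u)) =
          sum_list (map (\<lambda>x. x!0 * \<alpha> (x!1)) (map (\<lambda>x. [x ! 0, x ! 1 * \<phi> b]) u))"
      by (rule L2[where \<phi>=\<phi>, OF P1 P2 e])
    then show ?thesis unfolding rr_def
      by (simp add: o_def P3 sum_list_const_mult[symmetric] sum_list_mult_const[symmetric] mult.assoc)
  qed
  then show ?thesis by (simp add: Rset_def)
qed

lemma Gj_AT:
  assumes u: "u \<in> Tset \<phi>" and F: "F \<in> AT_hom \<phi> (Suc (Suc k))"
  shows "Gj u F \<in> AT_hom \<phi> (Suc k)"
proof -
  define h where "h z = rr u (\<lambda>y. F [y # z])" for z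
  have G: "Gj u F l = sum_list (map h l)" for l unfolding Gj_def h_def by simp
  have resp: "Gj u F l = Gj u F l'" if e: "Atensor_eq \<phi> (Suc k) l l'" for l l'
    unfolding G
  proof (rule tensor_eq_sum_resp[OF e])
    fix i and x y :: "'a list"
    assume a: "i < length (replicate (Suc k) (UNIV::'a set))" "x \<in> Atuples (Suc k)" "y \<in> Atuples (Suc k)"
      "\<forall>j. j \<noteq> i \<longrightarrow> x ! j = y ! j"
    have "F [w1 # x[i := x ! i + y ! i]] = F [w1 # x] + F [w1 # y]" for w1
    proof -
      have "Atensor_eq \<phi> (Suc (Suc k)) [(w1 # x)[Suc i := (w1#x) ! Suc i + (w1#y) ! Suc i]] [w1 # x, w1 # y]"
        by (rule tensor_eq.add) (use a in \<open>auto simp: Atuples_eq Atuples_eq2 Atuples_eq3 nth_Cons split: nat.splits\<close>)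
      then have "F [w1 # x[i := x ! i + y ! i]] = F ([w1 # x] @ [w1 # y])" using AT_resp[OF F] by simp
      also have "\<dots> = F [w1 # x] + F [w1 # y]" using a F by (intro AT_app) (auto simp: Atuples_eq Atuples_eq2 Atuples_eq3)
      finally show ?thesis .
    qed
    then show "h (x[i := x ! i + y ! i]) = h x + h y" unfolding h_def by (intro rr_add) auto
  next
    fix i and x :: "'a list"
    assume a: "i < length (replicate (Suc k) (UNIV::'a set))" "x \<in> Atuples (Suc k)" "x ! i = 0"
    have "F [w1 # x] = 0" for w1
    proof -
      have "Atensor_eq \<phi> (Suc (Suc k)) [w1 # x] []"
        by (rule tensor_eq.zero[of "Suc i"]) (use a in \<open>auto simp: Atuples_eq Atuples_eq2 Atuples_eq3\<close>)
      then show ?thesis using AT_resp[OF F] AT_nil[OF F] by metis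
    qed
    then show "h x = 0" unfolding h_def by (intro rr_zero) auto
  next
    fix i and x :: "'a list" and r
    assume a: "Suc i < length (replicate (Suc k) (UNIV::'a set))" "x \<in> Atuples (Suc k)" "r \<in> range \<phi>"
    have "F [w1 # x[i := x ! i * r]] = F [w1 # x[Suc i := r * x ! Suc i]]" for w1
    proof -
      have "Atensor_eq \<phi> (Suc (Suc k)) [(w1 # x)[Suc i := (w1 # x) ! Suc i * r]] [(w1 # x)[Suc (Suc i) := r * (w1 # x) ! Suc (Suc i)]]"
        by (rule tensor_eq.bal) (use a in \<open>auto simp: Atuples_eq Atuples_eq2 Atuples_eq3\<close>)
      then show ?thesis using AT_resp[OF F] by simp
    qed
    then show "h (x[i := x ! i * r]) = h (x[Suc i := r * x ! Suc i])" unfolding h_def by (intro rr_cong) auto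
  qed
  have lin: "Gj u F (map (\<lambda>x. x[0 := \<phi> b * x ! 0]) l) = \<phi> b * Gj u F l"
    if l: "set l \<subseteq> Atuples (Suc k)" for b l
  proof -
    have hz: "h (z[0 := \<phi> b * z ! 0]) = \<phi> b * h z" if z: "length z = Suc k" for z
    proof -
      have 1: "F [w1 # z[0 := \<phi> b * z ! 0]] = F [(w1 * \<phi> b) # z]" for w1
      proof -
        have "Atensor_eq \<phi> (Suc (Suc k)) [(w1 # z)[0 := (w1 # z) ! 0 * \<phi> b]] [(w1 # z)[Suc 0 := \<phi> b * (w1 # z) ! Suc 0]]"
          by (rule tensor_eq.bal) (use z in \<open>auto simp: Atuples_eq Atuples_eq2 Atuples_eq3\<close>)
        then show ?thesis using AT_resp[OF F] by simp
      qed
      have P1: "\<And>y y'. F [(y + y') # z] = F [y # z] + F [y' # z]" using AT_P_add[OF F] z by simp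
      have P2: "\<And>b y. F [(\<phi> b * y) # z] = \<phi> b * F [y # z]" using AT_P_lin[OF F] z by simp
      have e: "Atensor_eq \<phi> 2 (map (\<lambda>x. [\<phi> b * x ! 0, x ! 1]) u) (map (\<lambda>x. [x ! 0, x ! 1 * \<phi> b]) u)"
        using u by (simp add: Tset_def)
      have "sum_list (map (\<lambda>x. x!0 * F [x!1 # z]) (map (\<lambda>x. [\<phi> b * x ! 0, x ! 1]) u)) =
            sum_list (map (\<lambda>x. x!0 * F [x!1 # z]) (map (\<lambda>x. [x ! 0, x ! 1 * \<phi> b]) u))"
        by (rule L2[where \<phi>=\<phi> and P="\<lambda>y. F [y # z]", OF P1 P2 e])
      then show ?thesis unfolding h_def rr_def 1
        by (simp add: o_def sum_list_const_mult[symmetric] mult.assoc)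
    qed
    show ?thesis unfolding G using l hz
      by (simp add: o_def sum_list_const_mult[symmetric] Atuples_eq2 subset_iff cong: map_cong)
  qed
  show ?thesis unfolding AT_hom_def using resp Gj_app lin by blast
qed

lemma KI:
  assumes F: "F \<in> AT_hom \<phi> (Suc (Suc k))" and z: "length z = Suc k"
  shows "F [a # z] = sum_list (map (\<lambda>(g,u). g a * Gj u F [z]) (zip gs us))"
proof -
  have P1: "\<And>y y'. F [(y + y') # z] = F [y # z] + F [y' # z]" using AT_P_add[OF F] z by simp
  have P2: "\<And>b y. F [(\<phi> b * y) # z] = \<phi> b * F [y # z]" using AT_P_lin[OF F] z by simp
  show ?thesis using Q1[where P="\<lambda>y. F [y # z]", OF P1 P2, of a] by (simp add: Gj_def)
qed

end



lemma pv_lact0: "length y = length z \<Longrightarrow> y \<noteq> [] \<Longrightarrow> pv (y[0 := lactF r (y!0)]) z = r * pv y z"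
  by (cases y; cases z) (auto simp: lactF_def mult.assoc)

lemma rr_sum: "rr u (\<lambda>w. sum_list (map (\<lambda>y. A y w * B y) t)) = sum_list (map (\<lambda>y. rr u (A y) * B y) t)"
proof (induction t)
  case Nil then show ?case by (simp add: rr_def)
next
  case (Cons y t)
  have "rr u (\<lambda>w. sum_list (map (\<lambda>y. A y w * B y) (y # t))) = rr u (\<lambda>w. A y w * B y) + rr u (\<lambda>w. sum_list (map (\<lambda>y. A y w * B y) t))"
    by (rule rr_add) simp
  also have "rr u (\<lambda>w. A y w * B y) = rr u (A y) * B y"
    unfolding rr_def by (simp add: sum_list_mult_const[symmetric] mult.assoc)
  finally show ?case using Cons by simp
qed

lemma Atuples_eq1: "tuples [UNIV] = {x. length x = Suc 0}"
  using Atuples_eq[of "Suc 0"] by simp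

lemma MS0: "MS \<phi> 0 = [Eset \<phi>]" by (simp add: MS_def)

lemma eval_single: "eval_tensor t [x] = sum_list (map (\<lambda>y. pv y x) t)"
  by (simp add: eval_E1)

context qb begin

lemma zipD: "p \<in> set (zip gs us) \<Longrightarrow> fst p \<in> Sset \<phi> \<and> snd p \<in> Tset \<phi>"
  using gsS usT by (cases p) (auto dest: set_zip_leftD set_zip_rightD)

lemma Psi_good:
  "F \<in> AT_hom \<phi> (Suc k) \<Longrightarrow> set (Psi gs us k F) \<subseteq> tuples (MS \<phi> k) \<and>
     (\<forall>l. set l \<subseteq> Atuples (Suc k) \<longrightarrow> eval_tensor (Psi gs us k F) l = F l)"
proof (induction k arbitrary: F)
  case 0
  define f0 where "f0 = (\<lambda>a. F [[a]])"
  have "f0 \<in> Eset \<phi>"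
    using AT_P_add[OF 0, of "[]"] AT_P_lin[OF 0, of "[]"] unfolding Eset_def additive_def f0_def by simp
  then have t: "set (Psi gs us 0 F) \<subseteq> tuples (MS \<phi> 0)"
    by (simp add: MS0 tuples_Cons tuples_Nil f0_def)
  have "eval_tensor (Psi gs us 0 F) l = F l" if l: "set l \<subseteq> Atuples (Suc 0)" for l
  proof -
    have "\<And>x. x \<in> set l \<Longrightarrow> pv [f0] x = F [x]"
    proof -
      fix x assume "x \<in> set l"
      then have "length x = 1" using l by (auto simp: Atuples_eq1)
      then have "x = [x!0]" by (cases x) auto
      then show "pv [f0] x = F [x]" unfolding f0_def by (metis mult.right_neutral pv_Cons pv_Nil)
    qed
    then have "eval_tensor (Psi gs us 0 F) l = sum_list (map (\<lambda>x. F [x]) l)"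
      by (simp add: eval_E1 f0_def[symmetric] cong: map_cong)
    also have "\<dots> = F l" using AT_sum[OF 0 l] by simp
    finally show ?thesis .
  qed
  then show ?case using t by blast
next
  case (Suc k)
  have G: "Gj (snd p) F \<in> AT_hom \<phi> (Suc k)" if "p \<in> set (zip gs us)" for p
    using Gj_AT[OF _ Suc.prems] zipD[OF that] by blast
  have IH: "set (Psi gs us k (Gj (snd p) F)) \<subseteq> tuples (MS \<phi> k) \<and>
     (\<forall>l. set l \<subseteq> Atuples (Suc k) \<longrightarrow> eval_tensor (Psi gs us k (Gj (snd p) F)) l = Gj (snd p) F l)"
    if "p \<in> set (zip gs us)" for p using Suc.IH[OF G[OF that]] .
  have eq: "Psi gs us (Suc k) F = concat (map (\<lambda>p. map ((#) (fst p)) (Psi gs us k (Gj (snd p) F))) (zip gs us))"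
    by (simp add: split_def)
  have t: "set (Psi gs us (Suc k) F) \<subseteq> tuples (MS \<phi> (Suc k))"
    unfolding eq MS_Suc using IH zipD by (fastforce simp: tuples_Cons)
  have "eval_tensor (Psi gs us (Suc k) F) l = F l" if l: "set l \<subseteq> Atuples (Suc (Suc k))" for l
  proof -
    have "\<And>x. x \<in> set l \<Longrightarrow> sum_list (map (\<lambda>y. pv y x) (Psi gs us (Suc k) F)) = F [x]"
    proof -
      fix x assume "x \<in> set l"
      then have lx: "length x = Suc (Suc k)" using l by (auto simp: Atuples_eq3)
      then have x: "x = hd x # tl x" by (cases x) auto
      have ltl: "length (tl x) = Suc k" using lx by simp
      have "sum_list (map (\<lambda>y. pv y x) (Psi gs us (Suc k) F)) =
        sum_list (map (\<lambda>p. sum_list (map (\<lambda>y. fst p (hd x) * pv y (tl x)) (Psi gs us k (Gj (snd p) F)))) (zip gs us))"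
        unfolding eq by (subst x) (simp add: sum_list_map_concat o_def)
      also have "\<dots> = sum_list (map (\<lambda>p. fst p (hd x) * Gj (snd p) F [tl x]) (zip gs us))"
      proof (rule arg_cong[where f=sum_list], rule map_cong[OF HOL.refl])
        fix p assume p: "p \<in> set (zip gs us)"
        have "set [tl x] \<subseteq> Atuples (Suc k)" using ltl by (simp add: Atuples_eq2)
        then have "eval_tensor (Psi gs us k (Gj (snd p) F)) [tl x] = Gj (snd p) F [tl x]" using IH[OF p] by blast
        then show "sum_list (map (\<lambda>y. fst p (hd x) * pv y (tl x)) (Psi gs us k (Gj (snd p) F))) =
          fst p (hd x) * Gj (snd p) F [tl x]"
          by (simp add: eval_single sum_list_const_mult)
      qed
      also have "\<dots> = F [hd x # tl x]" using KI[OF Suc.prems ltl, of "hd x"] by (simp add: split_def)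
      finally show "sum_list (map (\<lambda>y. pv y x) (Psi gs us (Suc k) F)) = F [x]" using x by simp
    qed
    then have "eval_tensor (Psi gs us (Suc k) F) l = sum_list (map (\<lambda>x. F [x]) l)"
      by (simp add: eval_E1 cong: map_cong)
    also have "\<dots> = F l" using AT_sum[OF Suc.prems l] by simp
    finally show ?thesis .
  qed
  then show ?case using t by blast
qed

lemma Psi_cong:
  "(\<forall>l. set l \<subseteq> Atuples (Suc k) \<longrightarrow> F l = F' l) \<Longrightarrow> Psi gs us k F = Psi gs us k F'"
proof (induction k arbitrary: F F')
  case 0
  have "\<And>a. F [[a]] = F' [[a]]" using 0 by (simp add: Atuples_eq1)
  then show ?case by simp
next
  case (Suc k)
  have "\<And>u. \<forall>l. set l \<subseteq> Atuples (Suc k) \<longrightarrow> Gj u F l = Gj u F' l"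
  proof (intro allI impI)
    fix u and l :: "'a list list" assume l: "set l \<subseteq> Atuples (Suc k)"
    have "\<And>z y. z \<in> set l \<Longrightarrow> F [y # z] = F' [y # z]"
      using Suc.prems l by (auto simp: Atuples_eq2 Atuples_eq3 subset_iff)
    then show "Gj u F l = Gj u F' l" unfolding Gj_def rr_def by (simp cong: map_cong)
  qed
  then have "\<And>u. Psi gs us k (Gj u F) = Psi gs us k (Gj u F')" using Suc.IH by blast
  then show ?case by simp
qed

end



context qb begin

lemma sumfun_id:
  assumes a: "\<alpha> \<in> Sset \<phi>"
  shows "sum_list (map (\<lambda>p. ractF (fst p) (rr (snd p) \<alpha>)) (zip gs us)) = \<alpha>"
proof
  fix a
  have P1: "\<And>y y'. \<alpha> (y + y') = \<alpha> y + \<alpha> y'" and P2: "\<And>b y. \<alpha> (\<phi> b * y) = \<phi> b * \<alpha> y"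
    using a by (auto simp: Sset_def additive_def)
  show "sum_list (map (\<lambda>p. ractF (fst p) (rr (snd p) \<alpha>)) (zip gs us)) a = \<alpha> a"
    using Q1[OF P1 P2, of a] by (simp add: sum_list_fun_apply o_def ractF_def split_def)
qed

lemma Psi_inv:
  "set t \<subseteq> tuples (MS \<phi> k) \<Longrightarrow> tensor_eq (MS \<phi> k) (Rset \<phi>) ractF lactF (Psi gs us k (eval_tensor t)) t"
proof (induction k arbitrary: t)
  case 0
  let ?vs = "map (\<lambda>y. y!0) t"
  have ty: "\<And>y. y \<in> set t \<Longrightarrow> y = [y!0] \<and> y!0 \<in> Eset \<phi>"
  proof -
    fix y assume "y \<in> set t"
    then have "y \<in> tuples [Eset \<phi>]" using 0 MS0 by (metis subsetD)
    then show "y = [y!0] \<and> y!0 \<in> Eset \<phi>" by (cases y) (auto simp: tuples_Cons tuples_Nil dest: tuples_length)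
  qed
  have f: "(\<lambda>a. eval_tensor t [[a]]) = sum_list ?vs"
  proof
    fix a
    have "\<And>y. y \<in> set t \<Longrightarrow> pv y [a] = (y!0) a" using ty by (metis mult.right_neutral pv_Cons pv_Nil)
    then show "eval_tensor t [[a]] = sum_list ?vs a"
      by (simp add: eval_single sum_list_fun_apply o_def cong: map_cong)
  qed
  have z: "[0] \<in> tuples (MS \<phi> 0)" by (simp add: MS0 tuples_Cons tuples_Nil E_zero)
  have "tensor_eq (MS \<phi> 0) (Rset \<phi>) ractF lactF [[0][0 := sum_list ?vs]] (map (\<lambda>v. [0][0:=v]) ?vs)"
    by (rule tensor_eq_pos[OF z]) (use ty in \<open>auto simp: MS0 E_zero E_add\<close>)
  moreover have "map (\<lambda>v. [0][0:=v]) ?vs = t" using ty by (induction t) auto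
  ultimately show ?case using f by simp
next
  case (Suc k)
  define F where "F = eval_tensor t"
  have ty: "\<And>y. y \<in> set t \<Longrightarrow> y = hd y # tl y \<and> hd y \<in> Sset \<phi> \<and> tl y \<in> tuples (MS \<phi> k)"
  proof -
    fix y assume "y \<in> set t"
    then have "y \<in> tuples (Sset \<phi> # MS \<phi> k)" using Suc.prems MS_Suc by (metis subsetD)
    then show "y = hd y # tl y \<and> hd y \<in> Sset \<phi> \<and> tl y \<in> tuples (MS \<phi> k)"
      by (cases y) (auto simp: tuples_Cons tuples_Nil dest: tuples_length)
  qed
  have tyl: "\<And>y. y \<in> set t \<Longrightarrow> length (tl y) = Suc k \<and> tl y \<noteq> [] \<and> hd (tl y) = tl y ! 0 \<and> tl y ! 0 \<in> MS \<phi> k ! 0"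
  proof -
    fix y assume y: "y \<in> set t"
    then have l: "length (tl y) = Suc k" using ty tuples_length by (metis MS_length)
    then have "tl y \<noteq> []" by (metis list.size(3) nat.distinct(1))
    moreover have "tl y ! 0 \<in> MS \<phi> k ! 0" using ty[OF y] tuples_nth by (metis MS_length zero_less_Suc)
    ultimately show "length (tl y) = Suc k \<and> tl y \<noteq> [] \<and> hd (tl y) = tl y ! 0 \<and> tl y ! 0 \<in> MS \<phi> k ! 0"
      using l by (simp add: hd_conv_nth)
  qed
  define t' where "t' u = map (\<lambda>y. (tl y)[0 := lactF (rr u (hd y)) (hd (tl y))]) t" for u
  have t't: "set (t' u) \<subseteq> tuples (MS \<phi> k)" if u: "u \<in> Tset \<phi>" for u
  proof
    fix w assume "w \<in> set (t' u)"
    then obtain y where y: "y \<in> set t" and w: "w = (tl y)[0 := lactF (rr u (hd y)) (hd (tl y))]"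
      unfolding t'_def by auto
    have "rr u (hd y) \<in> Rset \<phi>" using Q2[OF u] ty[OF y] by blast
    then have "lactF (rr u (hd y)) (hd (tl y)) \<in> MS \<phi> k ! 0" using tyl[OF y] MS_lact[of 0 k] by auto
    then show "w \<in> tuples (MS \<phi> k)" unfolding w using ty[OF y] by (intro tuples_upd) auto
  qed
  have claimA: "Gj u F l = eval_tensor (t' u) l" if l: "set l \<subseteq> Atuples (Suc k)" for u l
  proof -
    have "\<And>z. z \<in> set l \<Longrightarrow> rr u (\<lambda>w. F [w # z]) = sum_list (map (\<lambda>y. pv y z) (t' u))"
    proof -
      fix z assume z: "z \<in> set l"
      then have lz: "length z = Suc k" using l by (auto simp: Atuples_eq2)
      have "\<And>w. F [w # z] = sum_list (map (\<lambda>y. hd y w * pv (tl y) z) t)"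
      proof -
        fix w
        have "\<And>y. y \<in> set t \<Longrightarrow> pv y (w # z) = hd y w * pv (tl y) z" using ty by (metis pv_Cons)
        then show "F [w # z] = sum_list (map (\<lambda>y. hd y w * pv (tl y) z) t)"
          unfolding F_def by (simp add: eval_single cong: map_cong)
      qed
      then have "rr u (\<lambda>w. F [w # z]) = sum_list (map (\<lambda>y. rr u (hd y) * pv (tl y) z) t)"
        using rr_sum[of u "\<lambda>y. hd y" "\<lambda>y. pv (tl y) z" t] by simp
      also have "\<dots> = sum_list (map (\<lambda>y. pv y z) (t' u))"
        unfolding t'_def using tyl lz by (simp add: o_def pv_lact0 cong: map_cong)
      finally show "rr u (\<lambda>w. F [w # z]) = sum_list (map (\<lambda>y. pv y z) (t' u))" .
    qed
    then show ?thesis unfolding Gj_def eval_E1 by (simp cong: map_cong)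
  qed
  have S1: "tensor_eq (MS \<phi> (Suc k)) (Rset \<phi>) ractF lactF (Psi gs us (Suc k) F)
      (concat (map (\<lambda>p. map ((#) (fst p)) (t' (snd p))) (zip gs us)))"
  proof -
    have eq: "Psi gs us (Suc k) F = concat (map (\<lambda>p. map ((#) (fst p)) (Psi gs us k (Gj (snd p) F))) (zip gs us))"
      by (simp add: split_def)
    show ?thesis unfolding eq
    proof (rule tensor_eq_concat)
      fix p assume p: "p \<in> set (zip gs us)"
      have "Psi gs us k (Gj (snd p) F) = Psi gs us k (eval_tensor (t' (snd p)))"
        using claimA by (intro Psi_cong) blast
      then have "tensor_eq (MS \<phi> k) (Rset \<phi>) ractF lactF (Psi gs us k (Gj (snd p) F)) (t' (snd p))"
        using Suc.IH[OF t't] zipD[OF p] by simp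
      then show "tensor_eq (MS \<phi> (Suc k)) (Rset \<phi>) ractF lactF (map ((#) (fst p)) (Psi gs us k (Gj (snd p) F)))
          (map ((#) (fst p)) (t' (snd p)))"
        unfolding MS_Suc using zipD[OF p] by (intro tensor_eq_Cons_map) auto
    qed
  qed
  define f :: "('a \<Rightarrow> 'a) \<times> 'a list list \<Rightarrow> ('a \<Rightarrow> 'a) list \<Rightarrow> ('a \<Rightarrow> 'a) list" where "f p y = ractF (fst p) (rr (snd p) (hd y)) # tl y" for p y
  have S2: "tensor_eq (MS \<phi> (Suc k)) (Rset \<phi>) ractF lactF
      (concat (map (\<lambda>p. map ((#) (fst p)) (t' (snd p))) (zip gs us)))
      (concat (map (\<lambda>p. map (f p) t) (zip gs us)))"
  proof (rule tensor_eq_concat)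
    fix p assume p: "p \<in> set (zip gs us)"
    have "map ((#) (fst p)) (t' (snd p)) = map (\<lambda>y. fst p # (tl y)[0 := lactF (rr (snd p) (hd y)) (hd (tl y))]) t"
      unfolding t'_def by simp
    moreover have "tensor_eq (MS \<phi> (Suc k)) (Rset \<phi>) ractF lactF
       (map (\<lambda>y. fst p # (tl y)[0 := lactF (rr (snd p) (hd y)) (hd (tl y))]) t) (map (f p) t)"
    proof (rule tensor_eq_map)
      fix y assume y: "y \<in> set t"
      let ?r = "rr (snd p) (hd y)"
      let ?x = "fst p # tl y"
      have r: "?r \<in> Rset \<phi>" using Q2 zipD[OF p] ty[OF y] by blast
      have xt: "?x \<in> tuples (MS \<phi> (Suc k))" using zipD[OF p] ty[OF y] by (simp add: MS_Suc tuples_Cons)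
      have "tensor_eq (MS \<phi> (Suc k)) (Rset \<phi>) ractF lactF [?x[0 := ractF (?x ! 0) ?r]] [?x[Suc 0 := lactF ?r (?x ! Suc 0)]]"
      proof (rule tensor_eq.bal)
        show "Suc 0 < length (MS \<phi> (Suc k))" by simp
        show "?x \<in> tuples (MS \<phi> (Suc k))" by (rule xt)
        show "?r \<in> Rset \<phi>" by (rule r)
        show "?x[0 := ractF (?x ! 0) ?r] \<in> tuples (MS \<phi> (Suc k))"
        proof -
          have "?x[0 := ractF (?x ! 0) ?r] = ractF (fst p) ?r # tl y" by simp
          moreover have "ractF (fst p) ?r \<in> Sset \<phi>" using r zipD[OF p] S_ract by blast
          ultimately show ?thesis using ty[OF y] by (simp add: MS_Suc tuples_Cons)
        qed
        show "?x[Suc 0 := lactF ?r (?x ! Suc 0)] \<in> tuples (MS \<phi> (Suc k))"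
          using xt r tyl[OF y] MS_lact[of 0 k] by (intro tuples_upd) (auto simp: MS_Suc)
      qed
      show "tensor_eq (MS \<phi> (Suc k)) (Rset \<phi>) ractF lactF
         [fst p # (tl y)[0 := lactF ?r (hd (tl y))]] [f p y]"
      proof -
        have e1: "?x[0 := ractF (?x ! 0) ?r] = f p y" unfolding f_def by simp
        have e2: "?x[Suc 0 := lactF ?r (?x ! Suc 0)] = fst p # (tl y)[0 := lactF ?r (hd (tl y))]"
          using tyl[OF y] by simp
        show ?thesis using tensor_eq.sym[OF \<open>tensor_eq (MS \<phi> (Suc k)) (Rset \<phi>) ractF lactF [?x[0 := ractF (?x ! 0) ?r]] [?x[Suc 0 := lactF ?r (?x ! Suc 0)]]\<close>]
          unfolding e1 e2 .
      qed
    qed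
    ultimately show "tensor_eq (MS \<phi> (Suc k)) (Rset \<phi>) ractF lactF (map ((#) (fst p)) (t' (snd p))) (map (f p) t)"
      by simp
  qed
  have S3: "tensor_eq (MS \<phi> (Suc k)) (Rset \<phi>) ractF lactF
      (concat (map (\<lambda>p. map (f p) t) (zip gs us)))
      (concat (map (\<lambda>y. map (\<lambda>p. f p y) (zip gs us)) t))"
  proof (rule tensor_eq_perm)
    show "set (concat (map (\<lambda>p. map (f p) t) (zip gs us))) \<subseteq> tuples (MS \<phi> (Suc k))"
      using tensor_eq_tuples[OF S2] by blast
    show "mset (concat (map (\<lambda>p. map (f p) t) (zip gs us))) = mset (concat (map (\<lambda>y. map (\<lambda>p. f p y) (zip gs us)) t))"
      by (rule mset_swap)
  qed
  have S4: "tensor_eq (MS \<phi> (Suc k)) (Rset \<phi>) ractF lactF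
      (concat (map (\<lambda>y. map (\<lambda>p. f p y) (zip gs us)) t)) (concat (map (\<lambda>y. [y]) t))"
  proof (rule tensor_eq_concat)
    fix y assume y: "y \<in> set t"
    let ?vs = "map (\<lambda>p. ractF (fst p) (rr (snd p) (hd y))) (zip gs us)"
    have yt: "y \<in> tuples (MS \<phi> (Suc k))" using Suc.prems y by auto
    have vs: "set ?vs \<subseteq> MS \<phi> (Suc k) ! 0"
    proof
      fix v assume "v \<in> set ?vs"
      then obtain p where p: "p \<in> set (zip gs us)" and v: "v = ractF (fst p) (rr (snd p) (hd y))" by auto
      have "rr (snd p) (hd y) \<in> Rset \<phi>" using Q2 zipD[OF p] ty[OF y] by blast
      then have "v \<in> Sset \<phi>" using v S_ract zipD[OF p] by blast
      then show "v \<in> MS \<phi> (Suc k) ! 0" by (simp add: MS_Suc)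
    qed
    have "tensor_eq (MS \<phi> (Suc k)) (Rset \<phi>) ractF lactF [y[0 := sum_list ?vs]] (map (\<lambda>v. y[0:=v]) ?vs)"
      by (rule tensor_eq_pos[OF yt _ vs]) (auto simp: MS_Suc S_zero S_add)
    note A = this
    have yy: "y = hd y # tl y" using ty[OF y] by blast
    have yv: "\<And>v. y[0:=v] = v # tl y"
    proof -
      fix v
      have "y[0:=v] = (hd y # tl y)[0:=v]" using yy by (rule arg_cong)
      also have "\<dots> = v # tl y" by simp
      finally show "y[0:=v] = v # tl y" .
    qed
    have sv: "sum_list ?vs = hd y" using sumfun_id ty[OF y] by blast
    have e0: "y[0 := sum_list ?vs] = y"
    proof -
      have "y[0 := sum_list ?vs] = hd y # tl y" unfolding sv by (rule yv)
      also have "\<dots> = y" using yy by (rule HOL.sym)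
      finally show ?thesis .
    qed
    have emap: "map (\<lambda>v. y[0:=v]) ?vs = map (\<lambda>p. f p y) (zip gs us)"
      unfolding f_def yv by simp
    show "tensor_eq (MS \<phi> (Suc k)) (Rset \<phi>) ractF lactF (map (\<lambda>p. f p y) (zip gs us)) [y]"
      using tensor_eq.sym[OF A[unfolded e0 emap]] .
  qed
  have "concat (map (\<lambda>y. [y]) t) = t" by (induction t) auto
  then show ?case using tensor_eq.trans[OF tensor_eq.trans[OF tensor_eq.trans[OF S1 S2] S3] S4] unfolding F_def by simp
qed

lemma iso_MS: "tensor_hom_iso \<phi> (MS \<phi> k)"
  unfolding tensor_hom_iso_def MS_length
proof (intro conjI allI impI ballI)
  fix t assume "set t \<subseteq> tuples (MS \<phi> k)"
  then show "eval_tensor t \<in> AT_hom \<phi> (Suc k)" by (rule eval_in_AT)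
next
  fix t t'
  assume t: "set t \<subseteq> tuples (MS \<phi> k)" and t': "set t' \<subseteq> tuples (MS \<phi> k)"
  show "(\<forall>l. set l \<subseteq> Atuples (Suc k) \<longrightarrow> eval_tensor t l = eval_tensor t' l) =
        tensor_eq (MS \<phi> k) (Rset \<phi>) ractF lactF t t'"
  proof
    assume e: "\<forall>l. set l \<subseteq> Atuples (Suc k) \<longrightarrow> eval_tensor t l = eval_tensor t' l"
    have "Psi gs us k (eval_tensor t) = Psi gs us k (eval_tensor t')" using e by (rule Psi_cong)
    then have "tensor_eq (MS \<phi> k) (Rset \<phi>) ractF lactF (Psi gs us k (eval_tensor t)) t'"
      using Psi_inv[OF t'] by simp
    then show "tensor_eq (MS \<phi> k) (Rset \<phi>) ractF lactF t t'"
      using tensor_eq.trans[OF tensor_eq.sym[OF Psi_inv[OF t]]] by blast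
  next
    assume "tensor_eq (MS \<phi> k) (Rset \<phi>) ractF lactF t t'"
    then show "\<forall>l. set l \<subseteq> Atuples (Suc k) \<longrightarrow> eval_tensor t l = eval_tensor t' l"
      using eval_resp_T by blast
  qed
next
  fix h assume "h \<in> AT_hom \<phi> (Suc k)"
  from Psi_good[OF this] show "\<exists>t. set t \<subseteq> tuples (MS \<phi> k) \<and> (\<forall>l. set l \<subseteq> Atuples (Suc k) \<longrightarrow> h l = eval_tensor t l)"
    by metis
qed

end

theorem lemma4p1:
  fixes \<phi> :: "'b::ring_1 \<Rightarrow> 'a::ring_1"
  assumes "unital_hom \<phi>"
    and "right_D2 \<phi>"
  shows "tensor_hom_iso \<phi> [Sset \<phi>, Eset \<phi>] \<and> tensor_hom_iso \<phi> [Sset \<phi>, Sset \<phi>, Eset \<phi>]"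
proof -
  obtain gs us where "qb \<phi> gs us"
    using assms(2) unfolding right_D2_def qb_def by blast
  then have "tensor_hom_iso \<phi> (MS \<phi> 1)" "tensor_hom_iso \<phi> (MS \<phi> 2)"
    by (auto intro: qb.iso_MS)
  moreover have "MS \<phi> 1 = [Sset \<phi>, Eset \<phi>]" "MS \<phi> 2 = [Sset \<phi>, Sset \<phi>, Eset \<phi>]"
    by (simp_all add: MS_def numeral_2_eq_2)
  ultimately show ?thesis by simp
qed


end
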